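(* Let $C$ and $C'$ be configurations of 2REG that are both convex, let $v\in C$, and let $t\ge0$ be an integer with $\mathrm{d}_C((0,0),v)\le t$. Then $C\equiv'_{t,v}C'$ if and only if $C'$ is a consistent extension of the subset $M(v,t,C)$ of $C$.
   Context: Positions are elements of $\mathbb{Z}^2$; with $\epsilon_0=(1,0)$, $\epsilon_1=(0,1)$, $\epsilon_2=(-1,0)$, $\epsilon_3=(0,-1)$, positions $p,p'$ are adjacent if $p'-p$ is one of the $\epsilon_i$. A path is a nonempty sequence of positions with consecutive positions adjacent. A configuration of 2REG is a finite set $C\subseteq\mathbb{Z}^2$ containing $(0,0)$ in which any two elements are joined by a path inside $C$. A set $X\subseteq\mathbb{Z}^2$ is convex if for any $v,v'\in X$, every shortest path between $v$ and $v'$ in $\mathbb{Z}^2$ lies in $X$. For $p,p'\in C$, $\mathrm{d}_C(p,p')$ is the number of steps of a shortest path from $p$ to $p'$ inside $C$. For $p\in C$, $\mathrm{bc}_C(p)=(b_0,\dots,b_3)\in\{0,1\}^4$ with $b_i=1$ iff $p+\epsilon_i\in C$. $\mathrm{ai}(v,t,C)$ is the symbol $\mathrm{Q}$ if $\mathrm{d}_C((0,0),v)>t$, and otherwise the triple $(t,v,\{(v',\mathrm{bc}_C(v')) : v'\in C,\ \mathrm{d}_C((0,0),v')+\mathrm{d}_C(v',v)\le t\})$. $C\equiv'_{t,v}C'$ means $v\in C\cap C'$ and $\mathrm{ai}(v,t,C)=\mathrm{ai}(v,t,C')\neq\mathrm{Q}$. $M(v,t,C)=\{v'\in C:\mathrm{d}_C((0,0),v')+\mathrm{d}_C(v',v)\le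 t\}$. $C'$ is a consistent extension of a subset $M$ of $C$ if $M\subseteq C'$ and $\mathrm{bc}_C(w)=\mathrm{bc}_{C'}(w)$ for all $w\in M$. *)

theory Defs
  imports Main
begin

type_synonym pos = "int \<times> int"

definition eps :: "nat \<Rightarrow> pos" where
  "eps i = (if i = 0 then (1, 0) else if i = 1 then (0, 1)
            else if i = 2 then (-1, 0) else (0, -1))"

definition padd :: "pos \<Rightarrow> pos \<Rightarrow> pos" where
  "padd p q = (fst p + fst q, snd p + snd q)"

definition adjacent :: "pos \<Rightarrow> pos \<Rightarrow> bool" where
  "adjacent p p' \<longleftrightarrow> (\<exists>i<4. p' = padd p (eps i))"

definition is_path :: "pos list \<Rightarrow> bool" where
  "is_path xs \<longleftrightarrow> xs \<noteq> [] \<and> (\<forall>i. Suc i < length xs \<longrightarrow> adjacent (xs ! i) (xs ! Suc i))"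

definition path_in :: "pos set \<Rightarrow> pos \<Rightarrow> pos \<Rightarrow> pos list \<Rightarrow> bool" where
  "path_in S p q xs \<longleftrightarrow> is_path xs \<and> hd xs = p \<and> last xs = q \<and> set xs \<subseteq> S"

definition dist_in :: "pos set \<Rightarrow> pos \<Rightarrow> pos \<Rightarrow> nat" where
  "dist_in S p q = (LEAST n. \<exists>xs. path_in S p q xs \<and> length xs = Suc n)"

definition configuration :: "pos set \<Rightarrow> bool" where
  "configuration C \<longleftrightarrow> finite C \<and> (0, 0) \<in> C \<and>
     (\<forall>p\<in>C. \<forall>q\<in>C. \<exists>xs. path_in C p q xs)"

definition convex :: "pos set \<Rightarrow> bool" where
  "convex X \<longleftrightarrow> (\<forall>v\<in>X. \<forall>v'\<in>X. \<forall>xs.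
     path_in UNIV v v' xs \<and> length xs = Suc (dist_in UNIV v v') \<longrightarrow> set xs \<subseteq> X)"

definition bc :: "pos set \<Rightarrow> pos \<Rightarrow> bool list" where
  "bc C p = map (\<lambda>i. padd p (eps i) \<in> C) [0..<4]"

datatype ai_val = Q | AI nat pos "(pos \<times> bool list) set"

definition ai :: "pos \<Rightarrow> nat \<Rightarrow> pos set \<Rightarrow> ai_val" where
  "ai v t C = (if dist_in C (0, 0) v > t then Q
     else AI t v {(v', bc C v') | v'. v' \<in> C \<and> dist_in C (0, 0) v' + dist_in C v' v \<le> t})"

definition equiv' :: "pos set \<Rightarrow> nat \<Rightarrow> pos \<Rightarrow> pos set \<Rightarrow> bool" where
  "equiv' C t v C' \<longleftrightarrow> v \<in> C \<and> v \<in> C' \<and> ai v t C = ai v t C' \<and> ai v t C \<noteq> Q"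

definition Mset :: "pos \<Rightarrow> nat \<Rightarrow> pos set \<Rightarrow> pos set" where
  "Mset v t C = {v' \<in> C. dist_in C (0, 0) v' + dist_in C v' v \<le> t}"

definition consistent_extension :: "pos set \<Rightarrow> pos set \<Rightarrow> pos set \<Rightarrow> bool" where
  "consistent_extension C' M C \<longleftrightarrow> M \<subseteq> C' \<and> (\<forall>w\<in>M. bc C w = bc C' w)"

end

theory Submission
  imports Defs
begin

definition md :: "pos \<Rightarrow> pos \<Rightarrow> int" where
  "md p q = \<bar>fst p - fst q\<bar> + \<bar>snd p - snd q\<bar>"

lemma md_nonneg: "0 \<le> md p q" by (simp add: md_def)
lemma md_sym: "md p q = md q p" by (simp add: md_def abs_minus_commute)
lemma md_tri: "md p r \<le> md p q + md q r" by (simp add: md_def abs_triangle_ineq4 abs_diff_triangle_ineq)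
lemma md_self: "md p p = 0" by (simp add: md_def)
lemma md_zero: "md p q = 0 \<longleftrightarrow> p = q" by (cases p; cases q) (auto simp: md_def)

lemma adjacent_md: "adjacent p q \<longleftrightarrow> md p q = 1"
proof
  assume "adjacent p q"
  then obtain i where "i < 4" "q = padd p (eps i)" unfolding adjacent_def by blast
  then show "md p q = 1"
    by (auto simp: md_def padd_def eps_def eval_nat_numeral less_Suc_eq)
next
  assume h: "md p q = 1"
  obtain a b where p: "p = (a,b)" by (cases p)
  obtain c d where q: "q = (c,d)" by (cases q)
  have "(c = a+1 \<and> d = b) \<or> (c = a \<and> d = b+1) \<or> (c = a - 1 \<and> d = b) \<or> (c = a \<and> d = b - 1)"
    using h by (simp add: md_def p q) arith
  then show "adjacent p q"
  proof (elim disjE)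
    assume "c = a+1 \<and> d = b" then show ?thesis unfolding adjacent_def
      by (intro exI[of _ 0]) (simp add: p q padd_def eps_def)
  next
    assume "c = a \<and> d = b+1" then show ?thesis unfolding adjacent_def
      by (intro exI[of _ 1]) (simp add: p q padd_def eps_def)
  next
    assume "c = a - 1 \<and> d = b" then show ?thesis unfolding adjacent_def
      by (intro exI[of _ 2]) (simp add: p q padd_def eps_def)
  next
    assume "c = a \<and> d = b - 1" then show ?thesis unfolding adjacent_def
      by (intro exI[of _ 3]) (simp add: p q padd_def eps_def)
  qed
qed

lemma is_path_Cons2: "is_path (x#y#ys) \<longleftrightarrow> adjacent x y \<and> is_path (y#ys)"
  unfolding is_path_def
  by (auto simp: nth_Cons split: nat.splits)

lemma path_len: "is_path xs \<Longrightarrow> md (hd xs) (last xs) \<le> int (length xs) - 1"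
proof (induction xs)
  case Nil then show ?case by (simp add: is_path_def)
next
  case (Cons x xs)
  show ?case
  proof (cases xs)
    case Nil then show ?thesis by (simp add: md_self)
  next
    case (Cons y ys)
    with Cons.prems have a: "adjacent x y" and p: "is_path xs" by (auto simp: is_path_Cons2)
    have "md (hd xs) (last xs) \<le> int (length xs) - 1" using Cons.IH p by simp
    moreover have "md x y = 1" using a adjacent_md by simp
    moreover have "md x (last xs) \<le> md x y + md y (last xs)" by (rule md_tri)
    ultimately show ?thesis using Cons by simp
  qed
qed

lemma path_exists: "\<forall>p q. md p q = int n \<longrightarrow> (\<exists>xs. path_in UNIV p q xs \<and> length xs = Suc n)"
proof (induction n)
  case 0 then show ?case
    by (auto simp: md_zero path_in_def is_path_def intro!: exI[of _ "[_]"])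
next
  case (Suc n)
  show ?case
  proof (intro allI impI)
    fix p q assume h: "md p q = int (Suc n)"
    obtain a b where p: "p = (a,b)" by (cases p)
    obtain c d where q: "q = (c,d)" by (cases q)
    define u where "u = (if a < c then (a+1,b) else if a > c then (a - 1, b)
        else if b < d then (a, b+1) else (a, b - 1))"
    have "md u q = int n" "md p u = 1" using h by (auto simp: u_def md_def p q)
    then obtain xs where xs: "path_in UNIV u q xs" "length xs = Suc n" using Suc.IH by blast
    then obtain ys where ys: "xs = u # ys" by (cases xs) (auto simp: path_in_def)
    have "path_in UNIV p q (p # xs)"
      using xs `md p u = 1` ys by (auto simp: path_in_def is_path_Cons2 adjacent_md)
    then show "\<exists>xs. path_in UNIV p q xs \<and> length xs = Suc (Suc n)" using xs by auto
  qed
qed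

lemma dist_UNIV: "dist_in UNIV p q = nat (md p q)"
  unfolding dist_in_def
proof (rule Least_equality)
  show "\<exists>xs. path_in UNIV p q xs \<and> length xs = Suc (nat (md p q))"
    using path_exists[of "nat (md p q)"] md_nonneg[of p q] by (metis int_nat_eq)
next
  fix y assume "\<exists>xs. path_in UNIV p q xs \<and> length xs = Suc y"
  then obtain xs where "path_in UNIV p q xs" "length xs = Suc y" by blast
  then show "nat (md p q) \<le> y" using path_len[of xs] by (auto simp: path_in_def)
qed

lemma dist_convex:
  assumes "convex C" "p \<in> C" "q \<in> C"
  shows "dist_in C p q = nat (md p q)"
  unfolding dist_in_def
proof (rule Least_equality)
  obtain xs where xs: "path_in UNIV p q xs" "length xs = Suc (nat (md p q))"
    using path_exists[of "nat (md p q)"] md_nonneg[of p q] by (metis int_nat_eq)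
  then have "set xs \<subseteq> C" using assms unfolding convex_def dist_UNIV by blast
  then show "\<exists>xs. path_in C p q xs \<and> length xs = Suc (nat (md p q))"
    using xs by (auto simp: path_in_def)
next
  fix y assume "\<exists>xs. path_in C p q xs \<and> length xs = Suc y"
  then obtain xs where "path_in C p q xs" "length xs = Suc y" by blast
  then show "nat (md p q) \<le> y" using path_len[of xs] by (auto simp: path_in_def)
qed

lemma step_in:
  assumes "convex C" "w \<in> C" "(0,0) \<in> C" "w \<noteq> (0,0)"
  shows "\<exists>u\<in>C. md w u = 1 \<and> md u (0,0) = md w (0,0) - 1"
proof -
  obtain a b where p: "w = (a,b)" by (cases w)
  define u :: pos where "u = (if a < 0 then (a+1,b) else if a > 0 then (a - 1, b)
        else if b < 0 then (a, b+1) else (a, b - 1))"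
  have u1: "md w u = 1" "md u (0,0) = md w (0,0) - 1" using assms(4) by (auto simp: u_def md_def p)
  obtain xs where xs: "path_in UNIV u (0,0) xs" "length xs = Suc (nat (md u (0,0)))"
    using path_exists[of "nat (md u (0,0))"] md_nonneg[of u "(0,0)"] by (metis int_nat_eq)
  then obtain ys where ys: "xs = u # ys" by (cases xs) (auto simp: path_in_def)
  have pw: "path_in UNIV w (0,0) (w # xs)"
    using xs u1 ys by (auto simp: path_in_def is_path_Cons2 adjacent_md)
  have "length (w # xs) = Suc (dist_in UNIV w (0,0))"
    using xs u1 md_nonneg[of u "(0,0)"] by (simp add: dist_UNIV)
  then have "set (w#xs) \<subseteq> C" using assms pw unfolding convex_def by blast
  then have "u \<in> C" using ys by auto
  then show ?thesis using u1 by blast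
qed

lemma ai_alt: "ai v t C = (if dist_in C (0, 0) v > t then Q
     else AI t v ((\<lambda>w. (w, bc C w)) ` Mset v t C))"
  unfolding ai_def Mset_def by auto

lemma bc_nth: "i < 4 \<Longrightarrow> bc C u ! i = (padd u (eps i) \<in> C)"
  by (simp add: bc_def)

theorem theorem2:
  fixes C C' :: "pos set" and v :: pos and t :: nat
  assumes "configuration C" and "configuration C'"
    and "convex C" and "convex C'"
    and "v \<in> C" and "dist_in C (0, 0) v \<le> t"
  shows "equiv' C t v C' \<longleftrightarrow> consistent_extension C' (Mset v t C) C"
proof
  assume "equiv' C t v C'"
  then have v': "v \<in> C'" and e: "ai v t C = ai v t C'" and nq: "ai v t C \<noteq> Q"
    by (auto simp: equiv'_def)
  have nq': "ai v t C' \<noteq> Q" using e nq by simp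
  have S: "(\<lambda>w. (w, bc C w)) ` Mset v t C = (\<lambda>w. (w, bc C' w)) ` Mset v t C'"
    using e nq nq' unfolding ai_alt by (auto split: if_splits)
  have "fst ` ((\<lambda>w. (w, bc C w)) ` Mset v t C) = Mset v t C" by (simp add: image_image)
  moreover have "fst ` ((\<lambda>w. (w, bc C' w)) ` Mset v t C') = Mset v t C'" by (simp add: image_image)
  ultimately have M: "Mset v t C = Mset v t C'" using S by simp
  have "Mset v t C \<subseteq> C'" using M by (auto simp: Mset_def)
  moreover have "\<forall>w\<in>Mset v t C. bc C w = bc C' w"
  proof
    fix w assume "w \<in> Mset v t C"
    then have "(w, bc C w) \<in> (\<lambda>w. (w, bc C' w)) ` Mset v t C'" using S by blast
    then show "bc C w = bc C' w" by auto
  qed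
  ultimately show "consistent_extension C' (Mset v t C) C"
    by (simp add: consistent_extension_def)
next
  assume ce: "consistent_extension C' (Mset v t C) C"
  have z: "(0,0) \<in> C" "(0,0) \<in> C'" using assms(1,2) by (auto simp: configuration_def)
  have dC: "\<And>p q. p \<in> C \<Longrightarrow> q \<in> C \<Longrightarrow> dist_in C p q = nat (md p q)"
    using dist_convex assms(3) by blast
  have dC': "\<And>p q. p \<in> C' \<Longrightarrow> q \<in> C' \<Longrightarrow> dist_in C' p q = nat (md p q)"
    using dist_convex assms(4) by blast
  have MC: "Mset v t C = {w \<in> C. md (0,0) w + md w v \<le> int t}"
    unfolding Mset_def
  proof (rule Collect_cong)
    fix w show "(w \<in> C \<and> dist_in C (0, 0) w + dist_in C w v \<le> t) = (w \<in> C \<and> md (0, 0) w + md w v \<le> int t)"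
    proof (cases "w \<in> C")
      case True
      then have "dist_in C (0, 0) w = nat (md (0,0) w)" "dist_in C w v = nat (md w v)"
        using assms(5) z dC by auto
      moreover have "nat (md (0,0) w) + nat (md w v) = nat (md (0,0) w + md w v)"
        using md_nonneg[of "(0,0)" w] md_nonneg[of w v] by (simp add: nat_add_distrib)
      ultimately show ?thesis using True by (simp add: nat_le_iff)
    qed simp
  qed
  have vM: "v \<in> Mset v t C"
    using assms(5,6) z dC md_nonneg[of "(0,0)" v] unfolding MC by (simp add: md_self)
  then have v': "v \<in> C'" using ce by (auto simp: consistent_extension_def)
  have MC': "Mset v t C' = {w \<in> C'. md (0,0) w + md w v \<le> int t}"
    unfolding Mset_def
  proof (rule Collect_cong)
    fix w show "(w \<in> C' \<and> dist_in C' (0, 0) w + dist_in C' w v \<le> t) = (w \<in> C' \<and> md (0, 0) w + md w v \<le> int t)"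
    proof (cases "w \<in> C'")
      case True
      then have "dist_in C' (0, 0) w = nat (md (0,0) w)" "dist_in C' w v = nat (md w v)"
        using v' z dC' by auto
      moreover have "nat (md (0,0) w) + nat (md w v) = nat (md (0,0) w + md w v)"
        using md_nonneg[of "(0,0)" w] md_nonneg[of w v] by (simp add: nat_add_distrib)
      ultimately show ?thesis using True by (simp add: nat_le_iff)
    qed simp
  qed
  have key: "\<forall>w. nat (md w (0,0)) = k \<longrightarrow> w \<in> C' \<longrightarrow> md (0,0) w + md w v \<le> int t \<longrightarrow> w \<in> C" for k
  proof (induction k)
    case 0
    show ?case
    proof (intro allI impI)
      fix w assume "nat (md w (0,0)) = 0"
      then have "md w (0,0) = 0" using md_nonneg[of w "(0,0)"] by simp
      then have "w = (0,0)" using md_zero by blast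
      then show "w \<in> C" using z by simp
    qed
  next
    case (Suc k)
    show ?case
    proof (intro allI impI)
      fix w assume h: "nat (md w (0,0)) = Suc k" "w \<in> C'" "md (0,0) w + md w v \<le> int t"
      have "w \<noteq> (0,0)" using h(1) by (auto simp: md_self)
      then obtain u where u: "u \<in> C'" "md w u = 1" "md u (0,0) = md w (0,0) - 1"
        using step_in[OF assms(4) h(2) z(2)] by blast
      have "md u v \<le> md u w + md w v" by (rule md_tri)
      then have um: "md (0,0) u + md u v \<le> int t" using u h(3) md_sym[of u w] md_sym[of u "(0,0)"]
        md_sym[of w "(0,0)"] by simp
      have "nat (md u (0,0)) = k" using u(3) h(1) by simp
      then have uC: "u \<in> C" using Suc.IH u(1) um by blast
      then have "u \<in> Mset v t C" unfolding MC using um by simp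
      then have bq: "bc C u = bc C' u" using ce by (auto simp: consistent_extension_def)
      have "adjacent u w" using u(2) md_sym adjacent_md by metis
      then obtain i where i: "i < 4" "w = padd u (eps i)" unfolding adjacent_def by blast
      show "w \<in> C" using bc_nth[OF i(1), of C u] bc_nth[OF i(1), of C' u] bq h(2) i(2) by simp
    qed
  qed
  have MM: "Mset v t C' = Mset v t C"
  proof
    show "Mset v t C' \<subseteq> Mset v t C" unfolding MC MC' using key by blast
    show "Mset v t C \<subseteq> Mset v t C'" using ce unfolding MC' by (auto simp: MC consistent_extension_def)
  qed
  have img: "(\<lambda>w. (w, bc C w)) ` Mset v t C = (\<lambda>w. (w, bc C' w)) ` Mset v t C'"
    unfolding MM using ce by (auto simp: consistent_extension_def intro!: image_cong)
  have d1: "\<not> dist_in C (0,0) v > t" using assms(6) by simp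
  have d2: "\<not> dist_in C' (0,0) v > t" using vM v' z dC dC' assms(5,6) by simp
  show "equiv' C t v C'"
    unfolding equiv'_def ai_alt using d1 d2 img assms(5) v' by simp
qed

end
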